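(* For each $t\in[0,1)$ the operator $C_t\colon H(\mathbb{D})\to H(\mathbb{D})$ is power bounded and uniformly mean ergodic, but it is not supercyclic. Moreover, $(I-C_t)(H(\mathbb{D}))=\{g\in H(\mathbb{D}):g(0)=0\}$, which is a closed subspace of $H(\mathbb{D})$, and $$H(\mathbb{D})=\operatorname{Ker}(I-C_t)\oplus(I-C_t)(H(\mathbb{D})).$$
   Context: $\mathbb{D}=\{z\in\mathbb{C}:|z|<1\}$ and $H(\mathbb{D})$ is the Fréchet space of holomorphic functions on $\mathbb{D}$ with the topology of uniform convergence on compact subsets. For $t\in[0,1]$, $C_t$ is defined on $f\in H(\mathbb{D})$ by $C_tf(0)=f(0)$ and $C_tf(z)=\frac{1}{z}\int_0^z\frac{f(\xi)}{1-t\xi}\,d\xi$ for $z\neq0$. A continuous linear operator $T$ on a locally convex Hausdorff space $X$ is power bounded if $\{T^n:n\in\mathbb{N}_0\}$ is equicontinuous; it is uniformly mean ergodic if the Cesàro means $T_{[n]}=\frac1n\sum_{m=1}^nT^m$ converge in the topology of uniform convergence on bounded subsets of $X$; it is supercyclic if there is $z\in X$ with $\{\lambda T^nz:\lambda\in\mathbb{C},n\in\mathbb{N}_0\}$ dense in $X$. *)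

theory Defs
  imports "HOL-Complex_Analysis.Complex_Analysis"
begin

text \<open>H(D): holomorphic functions on the unit disc, represented as functions
  complex => complex that vanish outside the disc (canonical representatives).\<close>
definition HD :: "(complex \<Rightarrow> complex) set" where
  "HD = {f. f holomorphic_on ball 0 1 \<and> (\<forall>z. z \<notin> ball 0 1 \<longrightarrow> f z = 0)}"

text \<open>Fundamental sequence of seminorms defining the Frechet topology of compact
  convergence: sup over the closed disc of radius (n+1)/(n+2).\<close>
definition pn :: "nat \<Rightarrow> (complex \<Rightarrow> complex) \<Rightarrow> real" where
  "pn n f = (SUP z\<in>cball 0 (real (n+1) / real (n+2)). cmod (f z))"

definition Ct :: "real \<Rightarrow> (complex \<Rightarrow> complex) \<Rightarrow> (complex \<Rightarrow> complex)" where
  "Ct t f = (\<lambda>z. if z \<notin> ball 0 1 then 0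
                 else if z = 0 then f 0
                 else contour_integral (linepath 0 z) (\<lambda>\<xi>. f \<xi> / (1 - of_real t * \<xi>)) / z)"

definition cesaro :: "((complex \<Rightarrow> complex) \<Rightarrow> (complex \<Rightarrow> complex)) \<Rightarrow> nat
                      \<Rightarrow> (complex \<Rightarrow> complex) \<Rightarrow> (complex \<Rightarrow> complex)" where
  "cesaro T n f = (\<lambda>z. (\<Sum>m=1..n. (T ^^ m) f z) / of_nat n)"

definition linear_H :: "((complex \<Rightarrow> complex) \<Rightarrow> (complex \<Rightarrow> complex)) \<Rightarrow> bool" where
  "linear_H T \<longleftrightarrow> (\<forall>f\<in>HD. \<forall>g\<in>HD. \<forall>a::complex.
      T (\<lambda>z. f z + g z) = (\<lambda>z. T f z + T g z) \<and> T (\<lambda>z. a * f z) = (\<lambda>z. a * T f z))"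

definition continuous_H :: "((complex \<Rightarrow> complex) \<Rightarrow> (complex \<Rightarrow> complex)) \<Rightarrow> bool" where
  "continuous_H T \<longleftrightarrow> (\<forall>n. \<exists>m C. \<forall>f\<in>HD. pn n (T f) \<le> C * pn m f)"

text \<open>Equicontinuity of the powers T^k, k in N_0 (for linear maps on a Frechet space
  with the above fundamental system of seminorms).\<close>
definition power_bounded_H :: "((complex \<Rightarrow> complex) \<Rightarrow> (complex \<Rightarrow> complex)) \<Rightarrow> bool" where
  "power_bounded_H T \<longleftrightarrow> (\<forall>n. \<exists>m C. \<forall>k. \<forall>f\<in>HD. pn n ((T ^^ k) f) \<le> C * pn m f)"

definition bounded_H :: "(complex \<Rightarrow> complex) set \<Rightarrow> bool" where
  "bounded_H B \<longleftrightarrow> B \<subseteq> HD \<and> (\<forall>n. \<exists>M. \<forall>f\<in>B. pn n f \<le> M)"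

text \<open>Cesaro means converge in L_b(H(D)) (uniformly on bounded sets) to some
  continuous linear operator P.\<close>
definition uniformly_mean_ergodic_H :: "((complex \<Rightarrow> complex) \<Rightarrow> (complex \<Rightarrow> complex)) \<Rightarrow> bool" where
  "uniformly_mean_ergodic_H T \<longleftrightarrow> (\<exists>P. (\<forall>f\<in>HD. P f \<in> HD) \<and> linear_H P \<and> continuous_H P \<and>
     (\<forall>B. bounded_H B \<longrightarrow> (\<forall>n. \<forall>\<epsilon>>0. eventually (\<lambda>k.
         \<forall>f\<in>B. pn n (\<lambda>z. cesaro T k f z - P f z) \<le> \<epsilon>) sequentially)))"

definition supercyclic_H :: "((complex \<Rightarrow> complex) \<Rightarrow> (complex \<Rightarrow> complex)) \<Rightarrow> bool" where
  "supercyclic_H T \<longleftrightarrow> (\<exists>x\<in>HD. \<forall>g\<in>HD. \<forall>n. \<forall>\<epsilon>>0. \<exists>(c::complex) (k::nat).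
      pn n (\<lambda>z. c * (T ^^ k) x z - g z) < \<epsilon>)"

definition subspace_H :: "(complex \<Rightarrow> complex) set \<Rightarrow> bool" where
  "subspace_H S \<longleftrightarrow> S \<subseteq> HD \<and> (\<lambda>z. 0) \<in> S \<and>
     (\<forall>f\<in>S. \<forall>g\<in>S. \<forall>a::complex. (\<lambda>z. f z + g z) \<in> S \<and> (\<lambda>z. a * f z) \<in> S)"

text \<open>Closedness in the (metrizable) topology of compact convergence, i.e. sequential closedness.\<close>
definition closed_H :: "(complex \<Rightarrow> complex) set \<Rightarrow> bool" where
  "closed_H S \<longleftrightarrow> (\<forall>F g. (\<forall>k. F k \<in> S) \<longrightarrow> g \<in> HD \<longrightarrow>
      (\<forall>n. (\<lambda>k. pn n (\<lambda>z. F k z - g z)) \<longlonglongrightarrow> 0) \<longrightarrow> g \<in> S)"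

end

theory Submission
  imports Defs
begin

definition rad :: "nat \<Rightarrow> real" where "rad n = real (n+1) / real (n+2)"

lemma rad_pos: "0 < rad n" by (simp add: rad_def)
lemma rad_lt1: "rad n < 1" by (simp add: rad_def)

lemma pn_rad: "pn n f = (SUP z\<in>cball 0 (rad n). cmod (f z))"
  by (simp add: pn_def rad_def)

lemma HD_iff: "f \<in> HD \<longleftrightarrow> f holomorphic_on ball 0 1 \<and> (\<forall>z. z \<notin> ball 0 1 \<longrightarrow> f z = 0)"
  by (simp add: HD_def)

lemma HD_bdd:
  assumes "f \<in> HD" "r < 1"
  shows "bdd_above ((\<lambda>z. cmod (f z)) ` cball 0 r)"
proof -
  have "cball 0 r \<subseteq> ball (0::complex) 1" using assms(2) by auto
  then have "continuous_on (cball 0 r) f"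
    using assms(1) unfolding HD_iff
    by (meson continuous_on_subset holomorphic_on_imp_continuous_on)
  then have "continuous_on (cball 0 r) (\<lambda>z. cmod (f z))"
    by (intro continuous_intros)
  then have "compact ((\<lambda>z. cmod (f z)) ` cball 0 r)"
    by (intro compact_continuous_image) auto
  then show ?thesis by (meson bounded_imp_bdd_above compact_imp_bounded)
qed

lemma pn_ge:
  assumes "f \<in> HD" "z \<in> cball 0 (rad n)"
  shows "cmod (f z) \<le> pn n f"
  unfolding pn_rad using HD_bdd[OF assms(1) rad_lt1] assms(2)
  by (intro cSUP_upper) auto

lemma pn_le:
  assumes "\<And>z. z \<in> cball 0 (rad n) \<Longrightarrow> cmod (f z) \<le> B"
  shows "pn n f \<le> B"
  unfolding pn_rad using assms rad_pos[of n]
  by (intro cSUP_least) auto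

lemma HD_lin:
  assumes "f \<in> HD" "g \<in> HD"
  shows "(\<lambda>z. a * f z + b * g z) \<in> HD"
  using assms unfolding HD_iff by (auto intro!: holomorphic_intros)

lemma HD_zero: "(\<lambda>z. 0) \<in> HD"
  unfolding HD_iff by auto

lemma HD_mk:
  assumes "h holomorphic_on ball 0 1"
  shows "(\<lambda>z. if z \<in> ball 0 1 then h z else 0) \<in> HD"
  unfolding HD_iff
proof
  show "(\<lambda>z. if z \<in> ball 0 1 then h z else 0) holomorphic_on ball 0 1"
    using assms by (rule holomorphic_transform) auto
qed auto

lemma Ct_out: "z \<notin> ball 0 1 \<Longrightarrow> Ct t f z = 0"
  by (simp add: Ct_def)

lemma Ct_zero: "Ct t f 0 = f 0"
  by (simp add: Ct_def)

lemma Ct_pow_zero: "(Ct t ^^ k) f 0 = f 0"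
  by (induction k) (auto simp: Ct_zero)

lemma prim_ci:
  assumes "\<And>x. x \<in> ball 0 1 \<Longrightarrow> (\<Phi> has_field_derivative F x) (at x)"
      and "z \<in> ball (0::complex) 1"
  shows "contour_integral (linepath 0 z) F = \<Phi> z - \<Phi> 0"
proof -
  have "closed_segment 0 z \<subseteq> ball (0::complex) 1"
    using assms(2) by (intro closed_segment_subset) auto
  have "(F has_contour_integral (\<Phi> (pathfinish (linepath 0 z)) - \<Phi> (pathstart (linepath 0 z)))) (linepath 0 z)"
  proof (rule contour_integral_primitive[where S="ball 0 1"])
    show "\<And>x. x \<in> ball 0 1 \<Longrightarrow> (\<Phi> has_field_derivative F x) (at x within ball 0 1)"
      using assms(1) by (rule has_field_derivative_at_within)
    show "valid_path (linepath 0 z)" by (rule valid_path_linepath)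
    show "path_image (linepath 0 z) \<subseteq> ball 0 1"
      using \<open>closed_segment 0 z \<subseteq> ball 0 1\<close> by (simp only: path_image_linepath)
  qed
  then show ?thesis by (auto intro: contour_integral_unique)
qed

lemma exists_prim:
  assumes "F holomorphic_on ball (0::complex) 1"
  obtains \<Phi> where "\<And>x. x \<in> ball 0 1 \<Longrightarrow> (\<Phi> has_field_derivative F x) (at x)"
proof -
  obtain \<Phi> where "\<And>x. x \<in> ball 0 1 \<Longrightarrow> (\<Phi> has_field_derivative F x) (at x within ball 0 1)"
    using holomorphic_convex_primitive'[OF convex_ball open_ball assms] by blast
  then show ?thesis using that by (metis at_within_open open_ball)
qed

lemma den_ne:
  assumes "0 \<le> t" "t < 1" "cmod z \<le> 1"
  shows "1 - of_real t * z \<noteq> 0" and "cmod (1 - of_real t * z) \<ge> 1 - t"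
proof -
  have "cmod (of_real t * z) \<le> t" using assms by (simp add: norm_mult mult_left_le)
  moreover have "cmod (1 - of_real t * z) \<ge> 1 - cmod (of_real t * z)"
    by (metis norm_one norm_triangle_ineq2)
  ultimately show "cmod (1 - of_real t * z) \<ge> 1 - t" by linarith
  then show "1 - of_real t * z \<noteq> 0" using assms by auto
qed

lemma Ct_HD:
  assumes t: "0 \<le> t" "t < 1" and f: "f \<in> HD"
  shows "Ct t f \<in> HD"
proof -
  define F where "F = (\<lambda>\<xi>. f \<xi> / (1 - of_real t * \<xi>))"
  have Fh: "F holomorphic_on ball 0 1"
    unfolding F_def using f den_ne[OF t] unfolding HD_iff
    by (intro holomorphic_intros) (auto simp: less_imp_le)
  obtain \<Phi> where \<Phi>: "\<And>x. x \<in> ball 0 1 \<Longrightarrow> (\<Phi> has_field_derivative F x) (at x)"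
    using exists_prim[OF Fh] by blast
  define G where "G = (\<lambda>z. \<Phi> z - \<Phi> 0)"
  have G: "\<And>x. x \<in> ball 0 1 \<Longrightarrow> (G has_field_derivative F x) (at x)"
    unfolding G_def using \<Phi> by (auto intro!: derivative_eq_intros)
  have Gh: "G holomorphic_on ball 0 1"
    using G by (metis field_differentiable_def holomorphic_on_open open_ball)
  have dG: "deriv G 0 = f 0" using G[of 0] DERIV_imp_deriv by (force simp: F_def)
  have H: "(\<lambda>z. if z = 0 then deriv G 0 else (G z - G 0) / (z - 0)) holomorphic_on ball 0 1"
    by (rule pole_lemma[OF Gh]) auto
  have "Ct t f holomorphic_on ball 0 1"
  proof (rule holomorphic_transform[OF H])
    fix z :: complex assume z: "z \<in> ball 0 1"
    show "(if z = 0 then deriv G 0 else (G z - G 0) / (z - 0)) = Ct t f z"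
      using prim_ci[OF \<Phi> z] z dG unfolding Ct_def G_def F_def by auto
  qed
  then show ?thesis unfolding HD_iff by (auto simp: Ct_out)
qed

definition gam :: "real \<Rightarrow> complex \<Rightarrow> complex \<Rightarrow> complex" where
  "gam t z w = w * z / (1 - of_real t * z + of_real t * z * w)"

lemma gam_den_eq: fixes t s :: real and z :: complex shows "1 - of_real t * z + of_real t * z * of_real s = 1 - of_real (t * (1 - s)) * z"
  by (simp add: of_real_mult of_real_diff ring_distribs mult_ac)

lemma gam_den:
  assumes "0 \<le> t" "t < 1" "cmod z < 1" "0 \<le> s" "s \<le> 1"
  shows "cmod (1 - of_real t * z + of_real t * z * of_real s) \<ge> 1 - t * (1 - s) * cmod z"
    and "1 - t * (1 - s) * cmod z > 0"
    and "1 - of_real t * z + of_real t * z * of_real s \<noteq> 0"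
proof -
  have a: "t * (1 - s) \<le> 1 * 1" using assms by (intro mult_mono) auto
  have b: "t * (1 - s) * cmod z < 1"
  proof -
    have "t * (1 - s) * cmod z \<le> 1 * cmod z" using a assms by (intro mult_right_mono) auto
    then show ?thesis using assms by linarith
  qed
  have "cmod (1 - of_real (t * (1 - s)) * z) \<ge> 1 - cmod (of_real (t * (1 - s)) * z)"
    by (metis norm_one norm_triangle_ineq2)
  moreover have "cmod (of_real (t * (1 - s)) * z) = t * (1 - s) * cmod z"
    using assms by (simp only: norm_mult norm_of_real) (simp add: abs_of_nonneg)
  ultimately show c: "cmod (1 - of_real t * z + of_real t * z * of_real s) \<ge> 1 - t * (1 - s) * cmod z"
    by (simp only: gam_den_eq)
  show "1 - t * (1 - s) * cmod z > 0" using b by simp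
  then show "1 - of_real t * z + of_real t * z * of_real s \<noteq> 0" using c by auto
qed

lemma gam_norm:
  assumes "0 \<le> t" "t < 1" "cmod z < 1" "0 \<le> s" "s \<le> 1"
  shows "cmod (gam t z (of_real s)) \<le> cmod z * (1 - (1 - t) * (1 - s))"
proof -
  let ?D = "1 - of_real t * z + of_real t * z * of_real s"
  let ?d = "1 - t * (1 - s) * cmod z"
  note d = gam_den[OF assms]
  have "cmod (gam t z (of_real s)) = s * cmod z / cmod ?D"
    using assms by (simp add: gam_def norm_mult norm_divide mult.commute)
  also have "\<dots> \<le> s * cmod z / ?d"
    using d assms by (intro divide_left_mono mult_nonneg_nonneg) auto
  also have "\<dots> \<le> cmod z * (1 - (1 - t) * (1 - s))"
  proof -
    define u where "u = 1 - s"
    have u: "0 \<le> u" "u \<le> 1" using assms by (auto simp: u_def)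
    have k1: "0 \<le> 1 - (1 - t) * u"
    proof -
      have "(1 - t) * u \<le> 1 * 1" using u assms by (intro mult_mono) auto
      then show ?thesis by simp
    qed
    have k2: "1 - t * u \<le> 1 - t * u * cmod z"
    proof -
      have "t * u * cmod z \<le> t * u * 1" using u assms by (intro mult_left_mono) auto
      then show ?thesis by simp
    qed
    have "s \<le> (1 - (1 - t) * u) * (1 - t * u)"
    proof -
      have "(1 - (1 - t) * u) * (1 - t * u) = 1 - u + t * (1 - t) * u * u"
        by (simp add: algebra_simps)
      moreover have "t * (1 - t) * u * u \<ge> 0" using u assms by simp
      ultimately show ?thesis by (simp add: u_def)
    qed
    also have "\<dots> \<le> (1 - (1 - t) * u) * (1 - t * u * cmod z)"
      using k1 k2 by (intro mult_left_mono) auto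
    finally have "s \<le> (1 - (1 - t) * u) * ?d" by (simp add: u_def)
    then have "s * cmod z \<le> ((1 - (1 - t) * u) * ?d) * cmod z" by (rule mult_right_mono) simp
    then have "s * cmod z \<le> (cmod z * (1 - (1 - t) * (1 - s))) * ?d" by (simp add: u_def mult_ac)
    then show ?thesis using d(2) by (simp add: pos_divide_le_eq)
  qed
  finally show ?thesis .
qed

lemma gam_in:
  assumes "0 \<le> t" "t < 1" "cmod z < 1" "0 \<le> s" "s \<le> 1"
  shows "cmod (gam t z (of_real s)) \<le> cmod z"
proof -
  have "(1 - t) * (1 - s) \<ge> 0" using assms by auto
  then have "cmod z * (1 - (1 - t) * (1 - s)) \<le> cmod z * 1"
    by (intro mult_left_mono) auto
  then show ?thesis using gam_norm[OF assms] by simp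
qed

lemma one_minus_gam:
  assumes "1 - of_real t * z + of_real t * z * w \<noteq> 0"
  shows "1 - of_real t * gam t z w = (1 - of_real t * z) / (1 - of_real t * z + of_real t * z * w)"
  using assms by (simp add: gam_def field_simps)

lemma gam_deriv:
  assumes "1 - of_real t * z + of_real t * z * w \<noteq> 0"
  shows "(gam t z has_field_derivative (z * (1 - of_real t * z) / (1 - of_real t * z + of_real t * z * w)^2)) (at w)"
  unfolding gam_def[abs_def]
  using assms
  by (auto intro!: derivative_eq_intros simp: field_simps power2_eq_square)

lemma Ct_rep:
  assumes t: "0 \<le> t" "t < 1" and f: "f \<in> HD" and z: "z \<in> ball 0 1"
  shows "((\<lambda>s. (1 - of_real t * gam t z (of_real s)) * f (gam t z (of_real s)))
          has_integral ((1 - of_real t * z) * Ct t f z)) {0..1}"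
proof (cases "z = 0")
  case True
  then show ?thesis using has_integral_const_real[of "f 0" 0 1]
    by (simp add: gam_def Ct_zero)
next
  case False
  define F where "F = (\<lambda>\<xi>. f \<xi> / (1 - of_real t * \<xi>))"
  have Fh: "F holomorphic_on ball 0 1"
    unfolding F_def using f den_ne[OF t] unfolding HD_iff
    by (intro holomorphic_intros) (auto simp: less_imp_le)
  obtain \<Phi> where \<Phi>: "\<And>x. x \<in> ball 0 1 \<Longrightarrow> (\<Phi> has_field_derivative F x) (at x)"
    using exists_prim[OF Fh] by blast
  have zn: "cmod z < 1" using z by simp
  let ?D = "\<lambda>s. 1 - of_real t * z + of_real t * z * of_real s"
  define g' where "g' = (\<lambda>s::real. F (gam t z (of_real s)) * (z * (1 - of_real t * z) / (?D s)^2))"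
  have vd: "((\<lambda>s. \<Phi> (gam t z (of_real s))) has_vector_derivative g' s) (at s within {0..1})"
    if s: "s \<in> {0..1}" for s
  proof -
    have s01: "0 \<le> s" "s \<le> 1" using s by auto
    have Dn: "?D s \<noteq> 0" using gam_den(3)[OF t zn s01] .
    have gin: "gam t z (of_real s) \<in> ball 0 1"
      using gam_in[OF t zn s01] zn by simp
    have "((\<lambda>w. \<Phi> (gam t z w)) has_field_derivative
            (F (gam t z (of_real s)) * (z * (1 - of_real t * z) / (?D s)^2))) (at (of_real s))"
      by (rule DERIV_chain2[OF \<Phi>[OF gin] gam_deriv[OF Dn]])
    then show ?thesis unfolding g'_def by (rule has_vector_derivative_real_field)
  qed
  have I1: "(g' has_integral (\<Phi> (gam t z (of_real 1)) - \<Phi> (gam t z (of_real 0)))) {0..1}"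
    by (rule fundamental_theorem_of_calculus) (auto intro: vd)
  have "gam t z (of_real 1) = z" "gam t z (of_real 0) = 0" by (auto simp: gam_def)
  then have "\<Phi> (gam t z (of_real 1)) - \<Phi> (gam t z (of_real 0)) = z * Ct t f z"
    using prim_ci[OF \<Phi> z] False z by (simp add: Ct_def F_def)
  with I1 have I2: "(g' has_integral (z * Ct t f z)) {0..1}" by simp
  have I3: "((\<lambda>s. ((1 - of_real t * z) / z) * g' s) has_integral (((1 - of_real t * z) / z) * (z * Ct t f z))) {0..1}"
    by (rule has_integral_mult_right[OF I2])
  have eq: "((1 - of_real t * z) / z) * g' s = (1 - of_real t * gam t z (of_real s)) * f (gam t z (of_real s))"
    if s: "s \<in> {0..1}" for s
  proof -
    have s01: "0 \<le> s" "s \<le> 1" using s by auto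
    have Dn: "?D s \<noteq> 0" using gam_den(3)[OF t zn s01] .
    have tz: "1 - of_real t * z \<noteq> 0" using den_ne(1)[OF t] zn by simp
    have om: "1 - of_real t * gam t z (of_real s) = (1 - of_real t * z) / ?D s"
      by (rule one_minus_gam[OF Dn])
    have omn: "1 - of_real t * gam t z (of_real s) \<noteq> 0" using om tz Dn by simp
    have alg: "((1 - c) / z) * (a / ((1 - c) / D) * (z * (1 - c) / D^2)) = (1 - c) / D * a"
      if "D \<noteq> 0" "1 - c \<noteq> 0" "z \<noteq> 0" for a c D :: complex
      using that by (simp add: field_simps power2_eq_square)
    show ?thesis unfolding g'_def F_def om
      using alg[OF Dn tz False] by simp
  qed
  have "((1 - of_real t * z) / z) * (z * Ct t f z) = (1 - of_real t * z) * Ct t f z"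
    using False by (simp add: field_simps)
  then show ?thesis using has_integral_eq[OF eq I3] by simp
qed

lemma schwarz_r:
  assumes h: "h holomorphic_on ball 0 1" and h0: "h 0 = 0" and r: "0 < r" "r < 1"
    and hB: "\<And>\<xi>. \<xi> \<in> cball 0 r \<Longrightarrow> cmod (h \<xi>) \<le> B" and \<xi>: "\<xi> \<in> cball 0 r"
  shows "cmod (h \<xi>) \<le> B * cmod \<xi> / r"
proof -
  have B0: "0 \<le> B" using hB[of 0] r h0 by simp
  have xr: "cmod \<xi> \<le> r" using \<xi> by simp
  show ?thesis
  proof (cases "cmod \<xi> = r")
    case True
    then show ?thesis using hB[OF \<xi>] r by simp
  next
    case False
    then have xr': "cmod \<xi> < r" using xr by simp
    define u where "u = \<xi> / of_real r"
    have u: "norm u < 1" using xr' r by (simp add: u_def norm_divide)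
    have xu: "\<xi> = of_real r * u" using r by (simp add: u_def)
    show ?thesis
    proof (rule field_le_epsilon)
      fix e :: real assume e: "0 < e"
      define c where "c = B + e"
      have c: "0 < c" using B0 e by (simp add: c_def)
      define k where "k = (\<lambda>w. h (of_real r * w) / of_real c)"
      have kh: "k holomorphic_on ball 0 1"
      proof -
        have "(\<lambda>w. of_real r * w) ` ball 0 1 \<subseteq> ball (0::complex) 1"
        proof
          fix y :: complex assume "y \<in> (\<lambda>w. of_real r * w) ` ball 0 1"
          then obtain w where w: "cmod w < 1" "y = of_real r * w" by auto
          have "cmod y = r * cmod w" using w r by (simp add: norm_mult)
          also have "\<dots> \<le> r * 1" using w r by (intro mult_left_mono) auto
          also have "\<dots> < 1" using r by simp
          finally show "y \<in> ball 0 1" by simp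
        qed
        then show ?thesis unfolding k_def
          by (intro holomorphic_intros holomorphic_on_compose_gen[OF _ h, unfolded o_def]) auto
      qed
      have k0: "k 0 = 0" by (simp add: k_def h0)
      have kb: "cmod (k w) < 1" if "cmod w < 1" for w
      proof -
        have "of_real r * w \<in> cball 0 r" using that r by (simp add: norm_mult mult_left_le)
        then have "cmod (h (of_real r * w)) \<le> B" by (rule hB)
        then have "cmod (h (of_real r * w)) / c \<le> B / c" using c by (intro divide_right_mono) auto
        also have "B / c < 1" using c e by (simp add: c_def)
        finally show ?thesis using c by (simp add: k_def norm_divide)
      qed
      have "cmod (k u) \<le> cmod u" by (rule Schwarz_Lemma(1)[OF kh k0 kb u])
      moreover have "cmod (k u) = cmod (h \<xi>) / c" using c by (simp add: k_def xu norm_divide)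
      ultimately have "cmod (h \<xi>) / c \<le> cmod u" by simp
      then have "cmod (h \<xi>) \<le> c * cmod u"
        using c by (simp add: pos_divide_le_eq mult.commute)
      also have "\<dots> = B * cmod u + e * cmod u" by (simp add: c_def algebra_simps)
      also have "\<dots> \<le> B * cmod u + e" using u e by (simp add: mult_left_le)
      also have "B * cmod u = B * cmod \<xi> / r" using r by (simp add: u_def norm_divide)
      finally show "cmod (h \<xi>) \<le> B * cmod \<xi> / r + e" .
    qed
  qed
qed

lemma Ct_bound1:
  assumes t: "0 \<le> t" "t < 1" and f: "f \<in> HD" and r: "0 < r" "r < 1"
    and fB: "\<And>\<xi>. \<xi> \<in> cball 0 r \<Longrightarrow> cmod ((1 - of_real t * \<xi>) * f \<xi>) \<le> B"
    and z: "z \<in> cball 0 r"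
  shows "cmod ((1 - of_real t * z) * Ct t f z) \<le> B"
proof -
  have zb: "z \<in> ball 0 1" "cmod z < 1" using z r by auto
  note I = Ct_rep[OF t f zb(1)]
  let ?g = "\<lambda>s. (1 - of_real t * gam t z (of_real s)) * f (gam t z (of_real s))"
  have "norm (integral {0..1} ?g) \<le> integral {0..1} (\<lambda>s::real. B)"
  proof (rule Henstock_Kurzweil_Integration.integral_norm_bound_integral)
    show "?g integrable_on {0..1}" using I by blast
    show "(\<lambda>s::real. B) integrable_on {0..1}" by (metis has_integral_const_real integrable_on_def)
    fix s :: real assume "s \<in> {0..1}"
    then have "cmod (gam t z (of_real s)) \<le> cmod z" using gam_in[OF t zb(2)] by auto
    then have "gam t z (of_real s) \<in> cball 0 r" using z by simp
    then show "norm (?g s) \<le> B" by (rule fB)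
  qed
  then show ?thesis using I by (simp add: integral_unique)
qed

lemma lin_int:
  "((\<lambda>s. B * (1 - (1 - t) * (1 - s))) has_integral ((1 + t) / 2 * B)) {0..1::real}"
proof -
  define Q where "Q = (\<lambda>s::real. B * (s - (1 - t) * (s - s^2 / 2)))"
  have "((\<lambda>s. B * (1 - (1 - t) * (1 - s))) has_integral (Q 1 - Q 0)) {0..1}"
  proof (rule fundamental_theorem_of_calculus)
    fix s :: real assume "s \<in> {0..1}"
    have "(Q has_real_derivative B * (1 - (1 - t) * (1 - s))) (at s within {0..1})"
      unfolding Q_def by (auto intro!: derivative_eq_intros simp: field_simps)
    then show "(Q has_vector_derivative B * (1 - (1 - t) * (1 - s))) (at s within {0..1})"
      by (simp add: has_real_derivative_iff_has_vector_derivative)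
  qed simp
  moreover have "Q 1 - Q 0 = (1 + t) / 2 * B" by (simp add: Q_def power2_eq_square field_simps)
  ultimately show ?thesis by simp
qed

lemma Ct_bound2:
  assumes t: "0 \<le> t" "t < 1" and f: "f \<in> HD" and f0: "f 0 = 0" and r: "0 < r" "r < 1"
    and fB: "\<And>\<xi>. \<xi> \<in> cball 0 r \<Longrightarrow> cmod ((1 - of_real t * \<xi>) * f \<xi>) \<le> B"
    and z: "z \<in> cball 0 r"
  shows "cmod ((1 - of_real t * z) * Ct t f z) \<le> (1 + t) / 2 * B"
proof -
  have zb: "z \<in> ball 0 1" "cmod z < 1" using z r by auto
  have B0: "0 \<le> B" using fB[of 0] r f0 by simp
  note I = Ct_rep[OF t f zb(1)]
  let ?g = "\<lambda>s. (1 - of_real t * gam t z (of_real s)) * f (gam t z (of_real s))"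
  have hh: "(\<lambda>\<xi>. (1 - of_real t * \<xi>) * f \<xi>) holomorphic_on ball 0 1"
    using f unfolding HD_iff by (auto intro!: holomorphic_intros)
  have "norm (integral {0..1} ?g) \<le> integral {0..1} (\<lambda>s. B * (1 - (1 - t) * (1 - s)))"
  proof (rule Henstock_Kurzweil_Integration.integral_norm_bound_integral)
    show "?g integrable_on {0..1}" using I by blast
    show "(\<lambda>s. B * (1 - (1 - t) * (1 - s))) integrable_on {0..1}" using lin_int by blast
    fix s :: real assume s: "s \<in> {0..1}"
    then have s01: "0 \<le> s" "s \<le> 1" by auto
    have gn: "cmod (gam t z (of_real s)) \<le> cmod z * (1 - (1 - t) * (1 - s))"
      using gam_norm[OF t zb(2) s01] .
    have "cmod (gam t z (of_real s)) \<le> cmod z" using gam_in[OF t zb(2) s01] .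
    then have gin: "gam t z (of_real s) \<in> cball 0 r" using z by simp
    have "norm (?g s) \<le> B * cmod (gam t z (of_real s)) / r"
      by (rule schwarz_r[OF hh _ r fB gin]) (simp add: f0)
    also have "\<dots> \<le> B * (cmod z * (1 - (1 - t) * (1 - s))) / r"
      using gn B0 r by (intro divide_right_mono mult_left_mono) auto
    also have "\<dots> = B * (1 - (1 - t) * (1 - s)) * (cmod z / r)" by simp
    also have "\<dots> \<le> B * (1 - (1 - t) * (1 - s)) * 1"
    proof (rule mult_left_mono)
      show "cmod z / r \<le> 1" using z r by simp
      have "(1 - t) * (1 - s) \<le> 1 * 1" using t s01 by (intro mult_mono) auto
      then show "0 \<le> B * (1 - (1 - t) * (1 - s))" using B0 by simp
    qed
    finally show "norm (?g s) \<le> B * (1 - (1 - t) * (1 - s))" by simp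
  qed
  moreover have "integral {0..1} (\<lambda>s. B * (1 - (1 - t) * (1 - s))) = (1 + t) / 2 * B"
    by (rule integral_unique[OF lin_int])
  moreover have "integral {0..1} (\<lambda>s. (1 - of_real t * gam t z (of_real s)) * f (gam t z (of_real s)))
     = (1 - of_real t * z) * Ct t f z" by (rule integral_unique[OF I])
  ultimately show ?thesis by (simp only:)
qed

lemma Ct_pow_HD:
  assumes t: "0 \<le> t" "t < 1" and f: "f \<in> HD"
  shows "(Ct t ^^ k) f \<in> HD"
  by (induction k) (auto simp: f Ct_HD[OF t])

lemma Ct_iter1:
  assumes t: "0 \<le> t" "t < 1" and f: "f \<in> HD" and r: "0 < r" "r < 1"
    and fB: "\<And>\<xi>. \<xi> \<in> cball 0 r \<Longrightarrow> cmod ((1 - of_real t * \<xi>) * f \<xi>) \<le> B"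
  shows "z \<in> cball 0 r \<Longrightarrow> cmod ((1 - of_real t * z) * (Ct t ^^ k) f z) \<le> B"
proof (induction k arbitrary: z)
  case 0
  then show ?case using fB by simp
next
  case (Suc k)
  show ?case
    using Ct_bound1[OF t Ct_pow_HD[OF t f, of k] r Suc.IH Suc.prems] by simp
qed

lemma Ct_iter2:
  assumes t: "0 \<le> t" "t < 1" and f: "f \<in> HD" and f0: "f 0 = 0" and r: "0 < r" "r < 1"
    and fB: "\<And>\<xi>. \<xi> \<in> cball 0 r \<Longrightarrow> cmod ((1 - of_real t * \<xi>) * f \<xi>) \<le> B"
  shows "z \<in> cball 0 r \<Longrightarrow> cmod ((1 - of_real t * z) * (Ct t ^^ k) f z) \<le> ((1 + t) / 2) ^ k * B"
proof (induction k arbitrary: z)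
  case 0
  then show ?case using fB by simp
next
  case (Suc k)
  have "(Ct t ^^ k) f 0 = 0" by (simp add: Ct_pow_zero f0)
  from Ct_bound2[OF t Ct_pow_HD[OF t f, of k] this r Suc.IH Suc.prems]
  show ?case by (simp add: mult_ac)
qed

lemma div_bound:
  assumes t: "0 \<le> t" "t < 1" and z: "cmod z \<le> 1" and b: "cmod ((1 - of_real t * z) * w) \<le> B"
  shows "cmod w \<le> B / (1 - t)"
proof -
  have "cmod w * (1 - t) \<le> cmod w * cmod (1 - of_real t * z)"
    using den_ne(2)[OF t z] by (intro mult_left_mono) auto
  also have "\<dots> \<le> B" using b by (simp add: norm_mult mult.commute)
  finally show ?thesis using t by (simp add: le_divide_eq)
qed

lemma mult_bound:
  assumes t: "0 \<le> t" "t < 1" and z: "cmod z \<le> 1"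
  shows "cmod ((1 - of_real t * z) * w) \<le> (1 + t) * cmod w"
proof -
  have "cmod (1 - of_real t * z) \<le> 1 + cmod (of_real t * z)"
    by (metis norm_one norm_triangle_ineq4)
  also have "cmod (of_real t * z) \<le> t" using t z by (simp add: norm_mult mult_left_le)
  finally have "cmod (1 - of_real t * z) \<le> 1 + t" by simp
  then show ?thesis by (simp add: norm_mult mult_right_mono)
qed

lemma Ct_pow_pt:
  assumes t: "0 \<le> t" "t < 1" and f: "f \<in> HD" and z: "z \<in> cball 0 (rad n)"
  shows "cmod ((Ct t ^^ k) f z) \<le> (1 + t) * pn n f / (1 - t)"
proof -
  have fB: "cmod ((1 - of_real t * \<xi>) * f \<xi>) \<le> (1 + t) * pn n f" if "\<xi> \<in> cball 0 (rad n)" for \<xi>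
  proof -
    have "cmod \<xi> \<le> 1" using that rad_lt1[of n] by simp
    then have "cmod ((1 - of_real t * \<xi>) * f \<xi>) \<le> (1 + t) * cmod (f \<xi>)" by (rule mult_bound[OF t])
    also have "\<dots> \<le> (1 + t) * pn n f" using pn_ge[OF f that] t by (intro mult_left_mono) auto
    finally show ?thesis .
  qed
  have "cmod z \<le> 1" using z rad_lt1[of n] by simp
  then show ?thesis
    using div_bound[OF t _ Ct_iter1[OF t f rad_pos rad_lt1 fB z]] by simp
qed

lemma Ct_pow_pt0:
  assumes t: "0 \<le> t" "t < 1" and f: "f \<in> HD" and f0: "f 0 = 0" and z: "z \<in> cball 0 (rad n)"
  shows "cmod ((Ct t ^^ k) f z) \<le> ((1 + t) / 2) ^ k * ((1 + t) * pn n f) / (1 - t)"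
proof -
  have fB: "cmod ((1 - of_real t * \<xi>) * f \<xi>) \<le> (1 + t) * pn n f" if "\<xi> \<in> cball 0 (rad n)" for \<xi>
  proof -
    have "cmod \<xi> \<le> 1" using that rad_lt1[of n] by simp
    then have "cmod ((1 - of_real t * \<xi>) * f \<xi>) \<le> (1 + t) * cmod (f \<xi>)" by (rule mult_bound[OF t])
    also have "\<dots> \<le> (1 + t) * pn n f" using pn_ge[OF f that] t by (intro mult_left_mono) auto
    finally show ?thesis .
  qed
  have "cmod z \<le> 1" using z rad_lt1[of n] by simp
  then show ?thesis
    using div_bound[OF t _ Ct_iter2[OF t f f0 rad_pos rad_lt1 fB z]] by simp
qed

lemma Ct_pow_pn:
  assumes t: "0 \<le> t" "t < 1" and f: "f \<in> HD"
  shows "pn n ((Ct t ^^ k) f) \<le> (1 + t) / (1 - t) * pn n f"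
  using Ct_pow_pt[OF t f] by (intro pn_le) simp

lemma HD_smult: "f \<in> HD \<Longrightarrow> (\<lambda>z. a * f z) \<in> HD"
  using HD_lin[of f f a 0] by simp

lemma HD_diff: "f \<in> HD \<Longrightarrow> g \<in> HD \<Longrightarrow> (\<lambda>z. f z - g z) \<in> HD"
  using HD_lin[of f g 1 "-1"] by simp

lemma F_prim:
  assumes t: "0 \<le> t" "t < 1" and f: "f \<in> HD"
  obtains \<Phi> where "\<And>x. x \<in> ball 0 1 \<Longrightarrow> (\<Phi> has_field_derivative f x / (1 - of_real t * x)) (at x)"
proof -
  have Fh: "(\<lambda>\<xi>. f \<xi> / (1 - of_real t * \<xi>)) holomorphic_on ball 0 1"
    using f den_ne[OF t] unfolding HD_iff
    by (intro holomorphic_intros) (auto simp: less_imp_le)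
  from exists_prim[OF Fh] that show ?thesis by blast
qed

lemma Ct_inner:
  assumes "z \<in> ball 0 1" "z \<noteq> 0"
  shows "Ct t f z = contour_integral (linepath 0 z) (\<lambda>\<xi>. f \<xi> / (1 - of_real t * \<xi>)) / z"
  using assms by (simp add: Ct_def)

lemma Ct_lin:
  assumes t: "0 \<le> t" "t < 1" and f: "f \<in> HD" and g: "g \<in> HD"
  shows "Ct t (\<lambda>z. a * f z + b * g z) = (\<lambda>z. a * Ct t f z + b * Ct t g z)"
proof
  fix z :: complex
  obtain \<Phi>f where \<Phi>f: "\<And>x. x \<in> ball 0 1 \<Longrightarrow> (\<Phi>f has_field_derivative f x / (1 - of_real t * x)) (at x)"
    using F_prim[OF t f] by blast
  obtain \<Phi>g where \<Phi>g: "\<And>x. x \<in> ball 0 1 \<Longrightarrow> (\<Phi>g has_field_derivative g x / (1 - of_real t * x)) (at x)"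
    using F_prim[OF t g] by blast
  have \<Phi>: "((\<lambda>x. a * \<Phi>f x + b * \<Phi>g x) has_field_derivative (a * f x + b * g x) / (1 - of_real t * x)) (at x)"
    if "x \<in> ball 0 1" for x
  proof -
    have "((\<lambda>x. a * \<Phi>f x + b * \<Phi>g x) has_field_derivative
       (a * (f x / (1 - of_real t * x)) + b * (g x / (1 - of_real t * x)))) (at x)"
      by (intro DERIV_add DERIV_cmult \<Phi>f \<Phi>g that)
    then show ?thesis by (rule DERIV_cong) (simp add: add_divide_distrib)
  qed
  show "Ct t (\<lambda>z. a * f z + b * g z) z = a * Ct t f z + b * Ct t g z"
  proof (cases "z \<in> ball 0 1 \<and> z \<noteq> 0")
    case True
    then have zb: "z \<in> ball 0 1" and zn: "z \<noteq> 0" by auto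
    have "Ct t (\<lambda>z. a * f z + b * g z) z = ((a * \<Phi>f z + b * \<Phi>g z) - (a * \<Phi>f 0 + b * \<Phi>g 0)) / z"
      using Ct_inner[OF zb zn, of t "\<lambda>z. a * f z + b * g z"] prim_ci[OF \<Phi> zb] by simp
    moreover have "Ct t f z = (\<Phi>f z - \<Phi>f 0) / z"
      using Ct_inner[OF zb zn, of t f] prim_ci[OF \<Phi>f zb] by simp
    moreover have "Ct t g z = (\<Phi>g z - \<Phi>g 0) / z"
      using Ct_inner[OF zb zn, of t g] prim_ci[OF \<Phi>g zb] by simp
    moreover have "((a * \<Phi>f z + b * \<Phi>g z) - (a * \<Phi>f 0 + b * \<Phi>g 0)) / z
       = a * ((\<Phi>f z - \<Phi>f 0) / z) + b * ((\<Phi>g z - \<Phi>g 0) / z)"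
      by (simp add: diff_divide_distrib add_divide_distrib algebra_simps)
    ultimately show ?thesis by (simp only:)
  next
    case False
    then show ?thesis by (auto simp: Ct_def)
  qed
qed

lemma Ct_zero_fun:
  assumes t: "0 \<le> t" "t < 1"
  shows "Ct t (\<lambda>z. 0) = (\<lambda>z. 0)"
  using Ct_lin[OF t HD_zero HD_zero, of 0 0] by simp

lemma Ct_pow_lin:
  assumes t: "0 \<le> t" "t < 1" and f: "f \<in> HD" and g: "g \<in> HD"
  shows "(Ct t ^^ k) (\<lambda>z. a * f z + b * g z) = (\<lambda>z. a * (Ct t ^^ k) f z + b * (Ct t ^^ k) g z)"
proof (induction k)
  case 0
  then show ?case by simp
next
  case (Suc k)
  then show ?case
    using Ct_lin[OF t Ct_pow_HD[OF t f, of k] Ct_pow_HD[OF t g, of k], of a b] by simp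
qed

definition ee :: "real \<Rightarrow> complex \<Rightarrow> complex" where
  "ee t = (\<lambda>z. if z \<in> ball 0 1 then 1 / (1 - of_real t * z) else 0)"

lemma ee_HD:
  assumes t: "0 \<le> t" "t < 1"
  shows "ee t \<in> HD"
  unfolding ee_def using den_ne[OF t]
  by (intro HD_mk holomorphic_intros) (auto simp: less_imp_le)

lemma ee_0: "ee t 0 = 1" by (simp add: ee_def)

lemma ee_bound:
  assumes t: "0 \<le> t" "t < 1"
  shows "cmod (ee t z) \<le> 1 / (1 - t)"
proof (cases "z \<in> ball 0 1")
  case True
  then have "cmod z \<le> 1" by simp
  note d = den_ne[OF t this]
  have "cmod (ee t z) = 1 / cmod (1 - of_real t * z)" using True by (simp add: ee_def norm_divide)
  also have "\<dots> \<le> 1 / (1 - t)" using d t by (intro divide_left_mono) auto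
  finally show ?thesis .
next
  case False
  then show ?thesis using t by (simp add: ee_def)
qed

lemma Ct_ee:
  assumes t: "0 \<le> t" "t < 1"
  shows "Ct t (ee t) = ee t"
proof
  fix z :: complex
  have \<Phi>: "((\<lambda>x. x / (1 - of_real t * x)) has_field_derivative ee t x / (1 - of_real t * x)) (at x)"
    if "x \<in> ball 0 1" for x
  proof -
    have "cmod x \<le> 1" using that by simp
    note d = den_ne(1)[OF t this]
    show ?thesis using that d
      by (auto intro!: derivative_eq_intros simp: ee_def field_simps power2_eq_square)
  qed
  show "Ct t (ee t) z = ee t z"
  proof (cases "z \<in> ball 0 1 \<and> z \<noteq> 0")
    case True
    then have "cmod z \<le> 1" by simp
    note d = den_ne(1)[OF t this]
    show ?thesis
      using prim_ci[OF \<Phi>, of z] True d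
      by (simp add: Ct_def ee_def)
  next
    case False
    then show ?thesis by (auto simp: Ct_def ee_def)
  qed
qed

lemma Ct_pow_ee:
  assumes t: "0 \<le> t" "t < 1"
  shows "(Ct t ^^ k) (ee t) = ee t"
  by (induction k) (auto simp: Ct_ee[OF t])

lemma R_char:
  assumes t: "0 \<le> t" "t < 1"
  shows "(\<lambda>f z. f z - Ct t f z) ` HD = {g \<in> HD. g 0 = 0}"
proof
  show "(\<lambda>f z. f z - Ct t f z) ` HD \<subseteq> {g \<in> HD. g 0 = 0}"
    using HD_diff Ct_HD[OF t] by (auto simp: Ct_zero)
next
  show "{g \<in> HD. g 0 = 0} \<subseteq> (\<lambda>f z. f z - Ct t f z) ` HD"
  proof
    fix g assume "g \<in> {g \<in> HD. g 0 = 0}"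
    then have g: "g \<in> HD" and g0: "g 0 = 0" by auto
    have gh: "g holomorphic_on ball 0 1" using g by (simp add: HD_iff)
    define k where "k = (\<lambda>z. if z = 0 then deriv g 0 else (g z - g 0) / (z - 0))"
    have kh: "k holomorphic_on ball 0 1" unfolding k_def by (rule pole_lemma[OF gh]) auto
    obtain Kp where Kp: "\<And>x. x \<in> ball 0 1 \<Longrightarrow> (Kp has_field_derivative k x) (at x)"
      using exists_prim[OF kh] by blast
    define K where "K = (\<lambda>z. Kp z - Kp 0)"
    have dK: "\<And>x. x \<in> ball 0 1 \<Longrightarrow> (K has_field_derivative k x) (at x)"
      unfolding K_def using Kp by (auto intro!: derivative_eq_intros)
    have K0: "K 0 = 0" by (simp add: K_def)
    have Kh: "K holomorphic_on ball 0 1"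
      using dK by (metis field_differentiable_def holomorphic_on_open open_ball)
    have xk: "x * k x = g x" for x using g0 by (simp add: k_def)
    define f where "f = (\<lambda>z. if z \<in> ball 0 1 then g z + K z / (1 - of_real t * z) else 0)"
    have fHD: "f \<in> HD" unfolding f_def using gh Kh den_ne[OF t]
      by (intro HD_mk holomorphic_intros) (auto simp: less_imp_le)
    have \<Phi>: "((\<lambda>x. x * K x / (1 - of_real t * x)) has_field_derivative f x / (1 - of_real t * x)) (at x)"
      if x: "x \<in> ball 0 1" for x
    proof -
      have "cmod x \<le> 1" using x by simp
      note d = den_ne(1)[OF t this]
      have d2: "((\<lambda>x. 1 - of_real t * x) has_field_derivative (- of_real t)) (at x)"
        by (auto intro!: derivative_eq_intros)
      have "((\<lambda>x. x * K x / (1 - of_real t * x)) has_field_derivative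
              ((1 * K x + k x * x) * (1 - of_real t * x) - x * K x * (- of_real t)) /
                ((1 - of_real t * x) * (1 - of_real t * x))) (at x)"
        by (rule DERIV_divide[OF DERIV_mult[OF DERIV_ident dK[OF x]] d2 d])
      moreover have "((1 * K x + k x * x) * (1 - of_real t * x) - x * K x * (- of_real t)) /
                ((1 - of_real t * x) * (1 - of_real t * x)) = f x / (1 - of_real t * x)"
      proof -
        have alg: "((1 * KK + G) * (1 - c * x) - x * KK * (- c)) / ((1 - c * x) * (1 - c * x))
                   = (G + KK / (1 - c * x)) / (1 - c * x)" if "1 - c * x \<noteq> 0" for KK G c :: complex
        proof -
          have n: "(1*KK + G)*(1 - c*x) - x*KK*(-c) = G*(1-c*x) + KK" by (simp add: algebra_simps)
          have "G + KK / (1 - c * x) = (G*(1-c*x) + KK) / (1 - c*x)" using that by (simp add: divide_simps)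
          then show ?thesis unfolding n by (simp add: divide_divide_eq_left)
        qed
        have xk': "k x * x = g x" using xk[of x] by (simp add: mult.commute)
        show ?thesis using alg[OF d, of "K x" "g x"] x by (simp add: xk' f_def)
      qed
      ultimately show ?thesis by simp
    qed
    have "(\<lambda>z. f z - Ct t f z) = g"
    proof
      fix z :: complex
      show "f z - Ct t f z = g z"
      proof (cases "z \<in> ball 0 1 \<and> z \<noteq> 0")
        case True
        then have "cmod z \<le> 1" by simp
        note d = den_ne(1)[OF t this]
        have zb: "z \<in> ball 0 1" and zn: "z \<noteq> 0" using True by auto
        have "Ct t f z = (z * K z / (1 - of_real t * z) - 0 * K 0 / (1 - of_real t * 0)) / z"
          by (simp only: Ct_inner[OF zb zn] prim_ci[OF \<Phi> zb])
        then have "Ct t f z = K z / (1 - of_real t * z)" using zn by simp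
        then show ?thesis using True by (simp add: f_def)
      next
        case False
        then show ?thesis
        proof (cases "z = 0")
          case True
          then show ?thesis by (simp add: Ct_zero g0)
        next
          case False
          with \<open>\<not> (z \<in> ball 0 1 \<and> z \<noteq> 0)\<close> have "z \<notin> ball 0 1" by simp
          then show ?thesis using g by (simp add: f_def Ct_out HD_iff)
        qed
      qed
    qed
    then show "g \<in> (\<lambda>f z. f z - Ct t f z) ` HD" using fHD by force
  qed
qed

lemma ball_rad:
  assumes "z \<in> ball (0::complex) 1"
  obtains n where "z \<in> cball 0 (rad n)"
proof -
  have z: "cmod z < 1" using assms by simp
  obtain n where n: "1 / (1 - cmod z) < real n" using reals_Archimedean2 by blast
  have pos: "0 < 1 - cmod z" using z by simp
  have "1 < real n * (1 - cmod z)" using n pos by (simp add: divide_less_eq mult.commute)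
  then have "1 < (real n + 2) * (1 - cmod z)" using pos by (simp add: algebra_simps)
  then have "1 / (real n + 2) < 1 - cmod z" by (simp add: divide_less_eq mult.commute)
  moreover have "rad n = 1 - 1 / (real n + 2)" by (simp add: rad_def field_simps)
  ultimately have "cmod z \<le> rad n" by simp
  then show ?thesis using that by simp
qed

lemma NSC:
  assumes t: "0 \<le> t" "t < 1"
  shows "\<not> supercyclic_H (Ct t)"
proof
  assume "supercyclic_H (Ct t)"
  then obtain x where x: "x \<in> HD" and H: "\<forall>g\<in>HD. \<forall>n. \<forall>\<epsilon>>0. \<exists>(c::complex) (k::nat).
      pn n (\<lambda>z. c * (Ct t ^^ k) x z - g z) < \<epsilon>"
    unfolding supercyclic_H_def by blast
  have r0: "rad 0 = 1/2" by (simp add: rad_def)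
  have z0: "(0::complex) \<in> cball 0 (rad 0)" using rad_pos[of 0] by simp
  have z1: "(1/2::complex) \<in> cball 0 (rad 0)" using r0 by simp
  define P where "P = pn 0 x"
  have P0: "cmod (x 0) \<le> P" unfolding P_def by (rule pn_ge[OF x z0])
  define A where "A = 2 * ((1 + t) * P / (1 - t)) / cmod (x 0)"
  have Pn: "0 \<le> P" using P0 norm_ge_zero order_trans by blast
  have A0: "0 \<le> A" unfolding A_def using Pn t by (intro divide_nonneg_nonneg mult_nonneg_nonneg) auto
  define L where "L = 2 * (2 + A)"
  define g where "g = (\<lambda>z::complex. if z \<in> ball 0 1 then 1 + of_real L * z else 0)"
  have g: "g \<in> HD" unfolding g_def by (intro HD_mk holomorphic_intros)
  obtain c k where ck: "pn 0 (\<lambda>z. c * (Ct t ^^ k) x z - g z) < 1"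
    using H g by (meson zero_less_one)
  have hHD: "(\<lambda>z. c * (Ct t ^^ k) x z - g z) \<in> HD"
    by (intro HD_diff HD_smult Ct_pow_HD[OF t x] g)
  have e0: "cmod (c * x 0 - 1) < 1"
  proof -
    have "cmod (c * (Ct t ^^ k) x 0 - g 0) \<le> pn 0 (\<lambda>z. c * (Ct t ^^ k) x z - g z)"
      by (rule pn_ge[OF hHD z0])
    then show ?thesis using ck by (simp add: Ct_pow_zero g_def)
  qed
  have e1: "cmod (c * (Ct t ^^ k) x (1/2) - (1 + of_real L / 2)) < 1"
  proof -
    have "cmod (c * (Ct t ^^ k) x (1/2) - g (1/2)) \<le> pn 0 (\<lambda>z. c * (Ct t ^^ k) x z - g z)"
      by (rule pn_ge[OF hHD z1])
    moreover have "g (1/2) = 1 + of_real L / 2" by (simp add: g_def)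
    ultimately show ?thesis using ck by simp
  qed
  have x0: "x 0 \<noteq> 0"
  proof
    assume "x 0 = 0"
    then show False using e0 by simp
  qed
  have cb: "cmod c * cmod (x 0) < 2"
  proof -
    have "cmod (c * x 0) \<le> cmod (c * x 0 - 1) + 1"
      by (metis add.commute diff_add_cancel norm_one norm_triangle_ineq)
    then show ?thesis using e0 by (simp add: norm_mult)
  qed
  have cb': "cmod c \<le> 2 / cmod (x 0)" using cb x0 by (simp add: le_divide_eq less_imp_le)
  have tb: "cmod ((Ct t ^^ k) x (1/2)) \<le> (1 + t) * P / (1 - t)"
    unfolding P_def by (rule Ct_pow_pt[OF t x z1])
  have "cmod (c * (Ct t ^^ k) x (1/2)) \<le> (2 / cmod (x 0)) * ((1 + t) * P / (1 - t))"
    unfolding norm_mult by (intro mult_mono cb' tb) auto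
  also have "\<dots> = A" by (simp add: A_def)
  finally have cA: "cmod (c * (Ct t ^^ k) x (1/2)) \<le> A" .
  have "cmod (1 + of_real L / 2 :: complex) \<le> cmod (c * (Ct t ^^ k) x (1/2)) + cmod (c * (Ct t ^^ k) x (1/2) - (1 + of_real L / 2))"
    by (metis add.commute diff_add_cancel norm_minus_commute norm_triangle_ineq)
  also have "\<dots> < A + 1" using cA e1 by simp
  finally have "cmod (1 + of_real L / 2 :: complex) < A + 1" .
  moreover have "cmod (1 + of_real L / 2 :: complex) = 1 + L / 2"
  proof -
    have "(1 + of_real L / 2 :: complex) = of_real (1 + L / 2)" by simp
    then show ?thesis using A0 by (simp only: norm_of_real) (simp add: L_def)
  qed
  ultimately show False using A0 by (simp add: L_def)
qed

lemma geo_bound: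
  assumes "0 \<le> q" "q < (1::real)"
  shows "(\<Sum>m=1..k. q ^ m) \<le> 1 / (1 - q)"
proof -
  have "(\<Sum>m=1..k. q ^ m) \<le> (\<Sum>m. q ^ m)"
    using assms by (intro sum_le_suminf summable_geometric) auto
  also have "\<dots> = 1 / (1 - q)" using assms by (intro suminf_geometric) auto
  finally show ?thesis .
qed

lemma UME:
  assumes t: "0 \<le> t" "t < 1"
  shows "uniformly_mean_ergodic_H (Ct t)"
  unfolding uniformly_mean_ergodic_H_def
proof (intro exI[of _ "\<lambda>f z. f 0 * ee t z"] conjI allI impI ballI)
  show "\<And>f. f \<in> HD \<Longrightarrow> (\<lambda>z. f 0 * ee t z) \<in> HD" by (intro HD_smult ee_HD[OF t])
  show "linear_H (\<lambda>f z. f 0 * ee t z)"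
    unfolding linear_H_def by (auto simp: algebra_simps)
  show "continuous_H (\<lambda>f z. f 0 * ee t z)"
    unfolding continuous_H_def
  proof (intro allI exI ballI)
    fix n f assume f: "f \<in> HD"
    show "pn n (\<lambda>z. f 0 * ee t z) \<le> 1 / (1 - t) * pn n f"
    proof (rule pn_le)
      fix z :: complex assume "z \<in> cball 0 (rad n)"
      have "cmod (f 0) \<le> pn n f" using pn_ge[OF f, of 0 n] rad_pos[of n] by simp
      then have "cmod (f 0) * cmod (ee t z) \<le> pn n f * (1 / (1 - t))"
        using ee_bound[OF t] by (intro mult_mono) (auto intro: order_trans[OF norm_ge_zero])
      then show "cmod (f 0 * ee t z) \<le> 1 / (1 - t) * pn n f" by (simp add: norm_mult mult.commute)
    qed
  qed
next
  fix Bs n and \<epsilon> :: real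
  assume Bs: "bounded_H Bs" and e: "0 < \<epsilon>"
  from Bs have BsH: "Bs \<subseteq> HD" and "\<exists>M. \<forall>f\<in>Bs. pn n f \<le> M" unfolding bounded_H_def by auto
  then obtain M where M: "\<And>f. f \<in> Bs \<Longrightarrow> pn n f \<le> M" by blast
  define M' where "M' = max M 0"
  have M'0: "0 \<le> M'" by (simp add: M'_def)
  define q where "q = (1 + t) / 2"
  have q: "0 \<le> q" "q < 1" using t by (auto simp: q_def)
  define W where "W = ((1 + t) * (M' + M' / (1 - t)) / (1 - t)) * (1 / (1 - q))"
  have W0: "0 \<le> W" unfolding W_def using t q M'0 by (intro mult_nonneg_nonneg divide_nonneg_nonneg add_nonneg_nonneg) auto
  obtain N :: nat where N: "W / \<epsilon> < real N" using reals_Archimedean2 by blast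
  show "\<forall>\<^sub>F k in sequentially. \<forall>f\<in>Bs. pn n (\<lambda>z. cesaro (Ct t) k f z - f 0 * ee t z) \<le> \<epsilon>"
    unfolding eventually_sequentially
  proof (intro exI[of _ "N + 1"] allI impI ballI)
    fix k f assume k: "N + 1 \<le> k" and fB: "f \<in> Bs"
    have f: "f \<in> HD" using fB BsH by auto
    have fM: "pn n f \<le> M'" using M[OF fB] by (simp add: M'_def)
    have kpos: "0 < real k" using k by simp
    define g where "g = (\<lambda>z. 1 * f z + (- f 0) * ee t z)"
    have g: "g \<in> HD" unfolding g_def by (intro HD_lin f ee_HD[OF t])
    have g0: "g 0 = 0" by (simp add: g_def ee_0)
    have f0: "cmod (f 0) \<le> M'" using pn_ge[OF f, of 0 n] rad_pos[of n] fM by simp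
    have gM: "pn n g \<le> M' + M' / (1 - t)"
    proof (rule pn_le)
      fix z :: complex assume z: "z \<in> cball 0 (rad n)"
      have "cmod (g z) \<le> cmod (f z) + cmod (f 0) * cmod (ee t z)"
        unfolding g_def by (simp add: norm_mult) (metis norm_minus_commute norm_mult norm_triangle_ineq4)
      also have "\<dots> \<le> M' + M' * (1 / (1 - t))"
        using pn_ge[OF f z] fM f0 ee_bound[OF t, of z] M'0
        by (intro add_mono mult_mono) auto
      finally show "cmod (g z) \<le> M' + M' / (1 - t)" by simp
    qed
    have Tg: "(Ct t ^^ m) g = (\<lambda>z. (Ct t ^^ m) f z - f 0 * ee t z)" for m
      unfolding g_def Ct_pow_lin[OF t f ee_HD[OF t]] Ct_pow_ee[OF t] by simp
    define Cg where "Cg = (1 + t) * pn n g / (1 - t)"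
    have Cg: "Cg \<le> (1 + t) * (M' + M' / (1 - t)) / (1 - t)"
      unfolding Cg_def using gM t by (intro divide_right_mono mult_left_mono) auto
    show "pn n (\<lambda>z. cesaro (Ct t) k f z - f 0 * ee t z) \<le> \<epsilon>"
    proof (rule pn_le)
      fix z :: complex assume z: "z \<in> cball 0 (rad n)"
      have "cesaro (Ct t) k f z - f 0 * ee t z = (\<Sum>m=1..k. (Ct t ^^ m) g z) / of_nat k"
      proof -
        have "(\<Sum>m=1..k. (Ct t ^^ m) g z) = (\<Sum>m=1..k. (Ct t ^^ m) f z) - of_nat k * (f 0 * ee t z)"
          by (simp add: Tg sum_subtractf)
        then show ?thesis using kpos unfolding cesaro_def by (simp add: field_simps)
      qed
      then have "cmod (cesaro (Ct t) k f z - f 0 * ee t z) = cmod (\<Sum>m=1..k. (Ct t ^^ m) g z) / real k"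
        by (simp add: norm_divide)
      also have "\<dots> \<le> (\<Sum>m=1..k. q ^ m * Cg) / real k"
      proof (rule divide_right_mono)
        have "cmod (\<Sum>m=1..k. (Ct t ^^ m) g z) \<le> (\<Sum>m=1..k. cmod ((Ct t ^^ m) g z))"
          by (rule norm_sum)
        also have "\<dots> \<le> (\<Sum>m=1..k. q ^ m * Cg)"
        proof (rule sum_mono)
          fix m assume "m \<in> {1..k}"
          show "cmod ((Ct t ^^ m) g z) \<le> q ^ m * Cg"
            using Ct_pow_pt0[OF t g g0 z, of m] by (simp add: q_def Cg_def)
        qed
        finally show "cmod (\<Sum>m=1..k. (Ct t ^^ m) g z) \<le> (\<Sum>m=1..k. q ^ m * Cg)" .
      qed simp
      also have "\<dots> = Cg * (\<Sum>m=1..k. q ^ m) / real k"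
        by (simp add: sum_distrib_left mult.commute)
      also have "\<dots> \<le> W / real k"
      proof (rule divide_right_mono)
        have Cg0: "0 \<le> Cg" unfolding Cg_def using t pn_ge[OF g, of 0 n] rad_pos[of n]
          by (intro divide_nonneg_nonneg mult_nonneg_nonneg) (auto intro: order_trans[OF norm_ge_zero])
        have "Cg * (\<Sum>m=1..k. q ^ m) \<le> ((1 + t) * (M' + M' / (1 - t)) / (1 - t)) * (1 / (1 - q))"
          using Cg geo_bound[OF q, of k] Cg0 q by (intro mult_mono) (auto intro: sum_nonneg)
        then show "Cg * (\<Sum>m=1..k. q ^ m) \<le> W" by (simp add: W_def)
      qed simp
      also have "\<dots> \<le> \<epsilon>"
      proof -
        have "W < \<epsilon> * real N" using N e by (simp add: divide_less_eq mult.commute)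
        also have "\<dots> \<le> \<epsilon> * real k" using k e by (intro mult_left_mono) auto
        finally show ?thesis using kpos by (simp add: divide_le_eq mult.commute)
      qed
      finally show "cmod (cesaro (Ct t) k f z - f 0 * ee t z) \<le> \<epsilon>" .
    qed
  qed
qed

lemma closed_R0: "closed_H {g \<in> HD. g 0 = 0}"
  unfolding closed_H_def
proof (intro allI impI)
  fix F :: "nat \<Rightarrow> complex \<Rightarrow> complex" and g
  assume F: "\<forall>k. F k \<in> {g \<in> HD. g 0 = 0}" and g: "g \<in> HD"
    and lim: "\<forall>n. (\<lambda>k. pn n (\<lambda>z. F k z - g z)) \<longlonglongrightarrow> 0"
  have "cmod (g 0) \<le> 0"
  proof (rule LIMSEQ_le_const[OF lim[rule_format, of 0]])
    show "\<exists>N. \<forall>k\<ge>N. cmod (g 0) \<le> pn 0 (\<lambda>z. F k z - g z)"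
    proof (intro exI allI impI)
      fix k :: nat
      have FH: "F k \<in> HD" and F0: "F k 0 = 0" using F by auto
      have "cmod (F k 0 - g 0) \<le> pn 0 (\<lambda>z. F k z - g z)"
        by (rule pn_ge[OF HD_diff[OF FH g]]) (use rad_pos[of 0] in simp)
      then show "cmod (g 0) \<le> pn 0 (\<lambda>z. F k z - g z)" using F0 by simp
    qed
  qed
  then show "g \<in> {g \<in> HD. g 0 = 0}" using g by simp
qed

lemma subspace_R0: "subspace_H {g \<in> HD. g 0 = 0}"
  unfolding subspace_H_def
  using HD_zero HD_lin[of _ _ 1 1] HD_smult by auto

lemma K_fix: "(\<forall>z. f z - Ct t f z = 0) \<Longrightarrow> Ct t f = f"
  by auto

lemma K_pow: "Ct t f = f \<Longrightarrow> (Ct t ^^ k) f = f"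
  by (induction k) auto

lemma subspace_K:
  assumes t: "0 \<le> t" "t < 1"
  shows "subspace_H {f \<in> HD. \<forall>z. f z - Ct t f z = 0}"
  unfolding subspace_H_def
proof (intro conjI ballI allI)
  show "{f \<in> HD. \<forall>z. f z - Ct t f z = 0} \<subseteq> HD" by auto
  show "(\<lambda>z. 0) \<in> {f \<in> HD. \<forall>z. f z - Ct t f z = 0}" using HD_zero Ct_zero_fun[OF t] by simp
  fix f g a
  assume f: "f \<in> {f \<in> HD. \<forall>z. f z - Ct t f z = 0}" and g: "g \<in> {f \<in> HD. \<forall>z. f z - Ct t f z = 0}"
  have fH: "f \<in> HD" and gH: "g \<in> HD" using f g by auto
  have cf: "Ct t f = f" and cg: "Ct t g = g" using f g by (auto intro!: K_fix)
  show "(\<lambda>z. f z + g z) \<in> {f \<in> HD. \<forall>z. f z - Ct t f z = 0}"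
    using HD_lin[OF fH gH, of 1 1] Ct_lin[OF t fH gH, of 1 1] cf cg by simp
  show "(\<lambda>z. a * f z) \<in> {f \<in> HD. \<forall>z. f z - Ct t f z = 0}"
    using HD_smult[OF fH, of a] Ct_lin[OF t fH fH, of a 0] cf by simp
qed

lemma closed_K:
  assumes t: "0 \<le> t" "t < 1"
  shows "closed_H {f \<in> HD. \<forall>z. f z - Ct t f z = 0}"
  unfolding closed_H_def
proof (intro allI impI)
  fix F :: "nat \<Rightarrow> complex \<Rightarrow> complex" and g
  assume F: "\<forall>k. F k \<in> {f \<in> HD. \<forall>z. f z - Ct t f z = 0}" and g: "g \<in> HD"
    and lim: "\<forall>n. (\<lambda>k. pn n (\<lambda>z. F k z - g z)) \<longlonglongrightarrow> 0"
  have FH: "\<And>k. F k \<in> HD" using F by auto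
  have Ffix: "\<And>k. Ct t (F k) = F k" using F by (auto intro!: K_fix)
  have "g z - Ct t g z = 0" for z
  proof (cases "z \<in> ball 0 1")
    case False
    then show ?thesis using g by (simp add: HD_iff Ct_out)
  next
    case True
    then obtain n where z: "z \<in> cball 0 (rad n)" by (rule ball_rad)
    define C where "C = 1 + (1 + t) / (1 - t)"
    have "cmod (g z - Ct t g z) \<le> 0"
    proof (rule LIMSEQ_le_const)
      show "(\<lambda>k. C * pn n (\<lambda>z. F k z - g z)) \<longlonglongrightarrow> 0"
        using tendsto_mult[OF tendsto_const lim[rule_format, of n], of C] by simp
      show "\<exists>N. \<forall>k\<ge>N. cmod (g z - Ct t g z) \<le> C * pn n (\<lambda>z. F k z - g z)"
      proof (intro exI allI impI)
        fix k :: nat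
        define h where "h = (\<lambda>z. F k z - g z)"
        have hH: "h \<in> HD" unfolding h_def by (rule HD_diff[OF FH[of k] g])
        have Ch: "Ct t h = (\<lambda>z. Ct t (F k) z - Ct t g z)"
          using Ct_lin[OF t FH[of k] g, of 1 "-1"] by (simp add: h_def)
        have eq: "g z - Ct t g z = - h z + Ct t h z"
          using Ch Ffix[of k] by (simp add: h_def)
        have "cmod (g z - Ct t g z) \<le> cmod (h z) + cmod (Ct t h z)"
          unfolding eq by (metis norm_minus_cancel norm_triangle_ineq)
        also have "\<dots> \<le> pn n h + (1 + t) * pn n h / (1 - t)"
          using pn_ge[OF hH z] Ct_pow_pt[OF t hH z, of 1] by (intro add_mono) auto
        also have "\<dots> = C * pn n h" by (simp add: C_def field_simps)
        finally show "cmod (g z - Ct t g z) \<le> C * pn n (\<lambda>z. F k z - g z)" by (simp add: h_def)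
      qed
    qed
    then show ?thesis by simp
  qed
  then show "g \<in> {f \<in> HD. \<forall>z. f z - Ct t f z = 0}" using g by simp
qed

lemma KR:
  assumes t: "0 \<le> t" "t < 1"
  shows "{f \<in> HD. \<forall>z. f z - Ct t f z = 0} \<inter> {g \<in> HD. g 0 = 0} = {\<lambda>z. 0}"
proof
  show "{\<lambda>z. 0} \<subseteq> {f \<in> HD. \<forall>z. f z - Ct t f z = 0} \<inter> {g \<in> HD. g 0 = 0}"
    using HD_zero Ct_zero_fun[OF t] by simp
  show "{f \<in> HD. \<forall>z. f z - Ct t f z = 0} \<inter> {g \<in> HD. g 0 = 0} \<subseteq> {\<lambda>z. 0}"
  proof
    fix f assume fK: "f \<in> {f \<in> HD. \<forall>z. f z - Ct t f z = 0} \<inter> {g \<in> HD. g 0 = 0}"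
    then have f: "f \<in> HD" and f0: "f 0 = 0" and cf: "Ct t f = f" by (auto intro!: K_fix)
    have "f z = 0" for z
    proof (cases "z \<in> ball 0 1")
      case False
      then show ?thesis using f by (simp add: HD_iff)
    next
      case True
      then obtain n where z: "z \<in> cball 0 (rad n)" by (rule ball_rad)
      have "cmod (f z) \<le> 0"
      proof (rule LIMSEQ_le_const)
        show "(\<lambda>k. ((1 + t) / 2) ^ k * ((1 + t) * pn n f) / (1 - t)) \<longlonglongrightarrow> 0"
          using t by (intro tendsto_divide_zero tendsto_mult_left_zero LIMSEQ_power_zero) auto
        show "\<exists>N. \<forall>k\<ge>N. cmod (f z) \<le> ((1 + t) / 2) ^ k * ((1 + t) * pn n f) / (1 - t)"
          using Ct_pow_pt0[OF t f f0 z] K_pow[OF cf] by auto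
      qed
      then show ?thesis by simp
    qed
    then show "f \<in> {\<lambda>z. 0}" by auto
  qed
qed

lemma decomp:
  assumes t: "0 \<le> t" "t < 1" and f: "f \<in> HD"
  shows "\<exists>a\<in>{f \<in> HD. \<forall>z. f z - Ct t f z = 0}. \<exists>b\<in>{g \<in> HD. g 0 = 0}. f = (\<lambda>z. a z + b z)"
proof (intro bexI)
  show "(\<lambda>z. f 0 * ee t z) \<in> {f \<in> HD. \<forall>z. f z - Ct t f z = 0}"
    using HD_smult[OF ee_HD[OF t]] Ct_lin[OF t ee_HD[OF t] ee_HD[OF t], of "f 0" 0] Ct_ee[OF t] by simp
  show "(\<lambda>z. f z - f 0 * ee t z) \<in> {g \<in> HD. g 0 = 0}"
    using HD_diff[OF f HD_smult[OF ee_HD[OF t]]] by (simp add: ee_0)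
  show "f = (\<lambda>z. f 0 * ee t z + (f z - f 0 * ee t z))" by simp
qed

theorem proposition3p8:
  fixes t :: real
  assumes "0 \<le> t" and "t < 1"
  defines "R \<equiv> (\<lambda>f z. f z - Ct t f z) ` HD"
      and "K \<equiv> {f \<in> HD. \<forall>z. f z - Ct t f z = 0}"
  shows "(\<forall>f\<in>HD. Ct t f \<in> HD) \<and> linear_H (Ct t) \<and> continuous_H (Ct t)
    \<and> power_bounded_H (Ct t) \<and> uniformly_mean_ergodic_H (Ct t) \<and> \<not> supercyclic_H (Ct t)
    \<and> R = {g \<in> HD. g 0 = 0} \<and> subspace_H R \<and> closed_H R
    \<and> subspace_H K \<and> closed_H K
    \<and> K \<inter> R = {\<lambda>z. 0}
    \<and> (\<forall>f\<in>HD. \<exists>a\<in>K. \<exists>b\<in>R. f = (\<lambda>z. a z + b z))"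
proof -
  note t = assms(1) assms(2)
  have Rc: "R = {g \<in> HD. g 0 = 0}" unfolding R_def by (rule R_char[OF t])
  have HDc: "\<forall>f\<in>HD. Ct t f \<in> HD" using Ct_HD[OF t] by blast
  have lin: "linear_H (Ct t)" unfolding linear_H_def
  proof (intro ballI allI conjI)
    fix f g a assume f: "f \<in> HD" and g: "g \<in> HD"
    show "Ct t (\<lambda>z. f z + g z) = (\<lambda>z. Ct t f z + Ct t g z)" using Ct_lin[OF t f g, of 1 1] by simp
    show "Ct t (\<lambda>z. a * f z) = (\<lambda>z. a * Ct t f z)" using Ct_lin[OF t f f, of a 0] by simp
  qed
  have cont: "continuous_H (Ct t)" unfolding continuous_H_def
  proof (intro allI exI ballI)
    fix n f assume f: "f \<in> HD"
    show "pn n (Ct t f) \<le> (1 + t) / (1 - t) * pn n f" using Ct_pow_pn[OF t f, of n 1] by simp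
  qed
  have pb: "power_bounded_H (Ct t)" unfolding power_bounded_H_def
  proof (intro allI exI ballI)
    fix n k f assume f: "f \<in> HD"
    show "pn n ((Ct t ^^ k) f) \<le> (1 + t) / (1 - t) * pn n f" by (rule Ct_pow_pn[OF t f])
  qed
  have K: "subspace_H K" "closed_H K" unfolding K_def by (rule subspace_K[OF t], rule closed_K[OF t])
  have R: "subspace_H R" "closed_H R" unfolding Rc by (rule subspace_R0, rule closed_R0)
  have KRi: "K \<inter> R = {\<lambda>z. 0}" unfolding K_def Rc by (rule KR[OF t])
  have dec: "\<forall>f\<in>HD. \<exists>a\<in>K. \<exists>b\<in>R. f = (\<lambda>z. a z + b z)"
    unfolding K_def Rc using decomp[OF t] by blast
  show ?thesis using HDc lin cont pb UME[OF t] NSC[OF t] Rc K R KRi dec by blast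
qed

end
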